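(* Let $n\ge3$, $C_0\in\mathbb R$, and let $u\in C^2(\mathbb R^n\setminus\overline{B_1})$ be a radially symmetric solution of $$\frac1n\sum_{i=1}^n\ln\lambda_i(D^2u)=C_0\quad\text{in }|x|>1$$ (so all eigenvalues $\lambda_i(D^2u)$ are positive). Put $C'=e^{nC_0}$. Then there exist constants $c\ge -C'$ and $c_0'\in\mathbb R$ such that $$u(x)=\int_1^{|x|}t\,(ct^{-n}+C')^{\frac1n}\,dt+c_0'\qquad\text{for all }|x|>1.$$ Moreover $u$ is analytic at infinity: there is a constant $c_0\in\mathbb R$ such that $$u(x)=\frac12C'^{\frac1n}|x|^2+c_0+C'^{\frac1n}|x|^2\sum_{j=1}^{+\infty}\frac{\frac1n(\frac1n-1)\cdots(\frac1n-j+1)}{(2-nj)\,j!}\Big(\frac{c|x|^{-n}}{C'}\Big)^j$$ for $|x|>\max\{1,(|c|/C')^{1/n}\}$.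
   Context: $B_1$ is the open unit ball centered at the origin of $\mathbb R^n$; $\lambda_i(D^2u)$ are the eigenvalues of the Hessian of $u$. *)

theory Defs
  imports "HOL-Analysis.Analysis" "HOL-Computational_Algebra.Polynomial"
begin

definition partial :: "'n::finite \<Rightarrow> (real^'n \<Rightarrow> real) \<Rightarrow> real^'n \<Rightarrow> real" where
  "partial i f x = frechet_derivative f (at x) (axis i 1)"

definition C2_on :: "(real^'n::finite) set \<Rightarrow> (real^'n \<Rightarrow> real) \<Rightarrow> bool" where
  "C2_on S f \<longleftrightarrow>
     (\<forall>x\<in>S. f differentiable (at x)) \<and>
     (\<forall>i. \<forall>x\<in>S. partial i f differentiable (at x)) \<and>
     (\<forall>i. continuous_on S (partial i f)) \<and>
     (\<forall>i j. continuous_on S (partial j (partial i f)))"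

definition hessian :: "(real^'n::finite \<Rightarrow> real) \<Rightarrow> real^'n \<Rightarrow> real^'n^'n" where
  "hessian f x = (\<chi> i j. partial j (partial i f) x)"

definition charpoly :: "real^'n::finite^'n \<Rightarrow> real poly" where
  "charpoly A = det (\<chi> i j. (if i = j then [:0, 1:] else 0) - [:A $ i $ j:])"

definition eigenvalues_mult :: "real^'n::finite^'n \<Rightarrow> ('n \<Rightarrow> real) \<Rightarrow> bool" where
  "eigenvalues_mult A lam \<longleftrightarrow> charpoly A = (\<Prod>i\<in>UNIV. [:- lam i, 1:])"

definition radial :: "(real^'n::finite \<Rightarrow> real) \<Rightarrow> bool" where
  "radial f \<longleftrightarrow> (\<forall>x y. norm x > 1 \<longrightarrow> norm x = norm y \<longrightarrow> f x = f y)"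

end

theory Submission
  imports Defs
begin


lemma line_deriv:
  fixes u :: "real^'n \<Rightarrow> real" and e :: "real^'n"
  assumes "u differentiable (at (r *\<^sub>R e))"
  shows "((\<lambda>s. u (s *\<^sub>R e)) has_real_derivative frechet_derivative u (at (r *\<^sub>R e)) e) (at r)"
proof -
  let ?D = "frechet_derivative u (at (r *\<^sub>R e))"
  have d: "(u has_derivative ?D) (at (r *\<^sub>R e))" using assms frechet_derivative_works by blast
  have l: "((\<lambda>s. s *\<^sub>R e) has_derivative (\<lambda>h. h *\<^sub>R e)) (at r)"
    by (auto intro!: derivative_eq_intros)
  have "((\<lambda>s. u (s *\<^sub>R e)) has_derivative (\<lambda>h. ?D (h *\<^sub>R e))) (at r)"
    using has_derivative_compose[OF l, of u ?D] d by (simp add: o_def)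
  moreover have "(\<lambda>h. ?D (h *\<^sub>R e)) = (\<lambda>h. ?D e * h)"
    using linear_scale[OF has_derivative_linear[OF d]] by (auto simp: mult.commute)
  ultimately show ?thesis by (simp add: has_field_derivative_def)
qed

lemma norm_axis_scale: "norm (r *\<^sub>R (axis k 1 :: real^'n)) = \<bar>r\<bar>"
  by simp

lemma open_out: "open {x::'a::real_normed_vector. 1 < norm x}"
  by (intro open_Collect_less continuous_intros)

lemma radial_facts:
  fixes u :: "real^'n \<Rightarrow> real" and k :: 'n
  assumes C2: "C2_on {x. norm x > 1} u" and rad: "radial u"
  defines "f \<equiv> \<lambda>r. u (r *\<^sub>R axis k 1)"
    and "g \<equiv> \<lambda>r. partial k u (r *\<^sub>R axis k 1)"
    and "g2 \<equiv> \<lambda>r. partial k (partial k u) (r *\<^sub>R axis k 1)"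
  shows "\<And>r. r > 1 \<Longrightarrow> (f has_real_derivative g r) (at r)"
    and "\<And>r. r > 1 \<Longrightarrow> (g has_real_derivative g2 r) (at r)"
    and "\<And>y. norm y > 1 \<Longrightarrow> u y = f (norm y)"
    and "\<And>y i. norm y > 1 \<Longrightarrow> partial i u y = g (norm y) * y $ i / norm y"
    and "\<And>r. r > 1 \<Longrightarrow> hessian u (r *\<^sub>R axis k 1) =
           (\<chi> i j. if i = j then (if i = k then g2 r else g r / r) else 0)"
proof -
  let ?e = "axis k 1 :: real^'n"
  have du: "u differentiable (at x)" if "norm x > 1" for x
    using C2 that unfolding C2_on_def by auto
  have dpu: "partial i u differentiable (at x)" if "norm x > 1" for x i
    using C2 that unfolding C2_on_def by auto
  show fd: "(f has_real_derivative g r) (at r)" if "r > 1" for r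
    using line_deriv[OF du, of r ?e] that unfolding f_def g_def partial_def by simp
  show gd: "(g has_real_derivative g2 r) (at r)" if "r > 1" for r
    using line_deriv[OF dpu, of r ?e k] that unfolding g2_def g_def partial_def[of k "partial k u"] by simp
  show uf: "u y = f (norm y)" if "norm y > 1" for y
    using rad[unfolded radial_def, rule_format, of y "norm y *\<^sub>R ?e"] that unfolding f_def by simp
  have ud: "(u has_derivative (\<lambda>h. g (norm y) * (h \<bullet> sgn y))) (at y)" if y: "norm y > 1" for y
  proof -
    have "y \<noteq> 0" using y by auto
    have "((\<lambda>y. f (norm y)) has_derivative (\<lambda>h. g (norm y) * (h \<bullet> sgn y))) (at y)"
      using has_derivative_compose[OF has_derivative_norm[of y] fd[unfolded has_field_derivative_def, of "norm y"]] y
      by (simp add: o_def mult.commute \<open>y \<noteq> 0\<close>)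
    then show ?thesis
      by (rule has_derivative_transform_within_open[where s="{x. norm x > 1}"])
        (auto simp: y uf open_out)
  qed
  show pu: "partial i u y = g (norm y) * y $ i / norm y" if y: "norm y > 1" for y i
    unfolding partial_def frechet_derivative_at[OF ud[OF y], symmetric]
    using y by (simp add: sgn_div_norm inner_axis' divide_inverse)
  show "hessian u (r *\<^sub>R axis k 1) =
           (\<chi> i j. if i = j then (if i = k then g2 r else g r / r) else 0)" if r: "r > 1" for r
  proof -
    let ?y = "r *\<^sub>R ?e"
    have ny: "norm ?y = r" using r by simp
    have sy: "sgn ?y = ?e" using r by (simp add: sgn_scaleR sgn_div_norm)
    have y0: "?y \<noteq> 0" using r by simp
    have yi[simp]: "?y $ i = (if i = k then r else 0)" for i by (simp add: axis_def)
    have ax[simp]: "axis j 1 $ i = (if i = j then 1 else (0::real))" for i j :: 'n by (simp add: axis_def)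
    have gd': "(g has_derivative (\<lambda>x. g2 r * x)) (at (norm ?y))"
      using gd[OF r] unfolding ny has_field_derivative_def .
    have G: "((\<lambda>y. g (norm y)) has_derivative (\<lambda>h. g2 r * (h \<bullet> ?e))) (at ?y)"
      using has_derivative_compose[OF has_derivative_norm[OF y0] gd'] unfolding sy o_def .
    have E: "((\<lambda>y. g (norm y) * y $ i / norm y) has_derivative
     (\<lambda>h. g2 r * (h \<bullet> ?e) * ?y $ i / norm ?y + g (norm ?y) * (h $ i / norm ?y - ?y $ i * (h \<bullet> sgn ?y) / (norm ?y)^2))) (at ?y)" for i
      using y0 by (auto intro!: derivative_eq_intros G has_derivative_norm bounded_linear_imp_has_derivative[OF bounded_linear_vec_nth] simp: field_simps power2_eq_square)
    have P: "(partial i u has_derivative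
     (\<lambda>h. g2 r * (h \<bullet> ?e) * ?y $ i / norm ?y + g (norm ?y) * (h $ i / norm ?y - ?y $ i * (h \<bullet> sgn ?y) / (norm ?y)^2))) (at ?y)" for i
      by (rule has_derivative_transform_within_open[OF E open_out]) (use r in \<open>auto simp: pu\<close>)
    show ?thesis
      unfolding hessian_def partial_def[of _ "partial _ u"] frechet_derivative_at[OF P, symmetric]
      using r by (auto simp: vec_eq_iff ny sy inner_axis_axis power2_eq_square)
  qed
qed



lemma prod_neg: "(\<Prod>i\<in>(UNIV::'n::finite set). - (a i :: real)) = (-1)^CARD('n) * (\<Prod>i\<in>UNIV. a i)"
proof -
  have "(\<Prod>i\<in>(UNIV::'n set). - a i) = (\<Prod>i\<in>(UNIV::'n set). (-1) * a i)" by simp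
  also have "\<dots> = (\<Prod>i\<in>(UNIV::'n set). (-1::real)) * (\<Prod>i\<in>UNIV. a i)" by (rule prod.distrib)
  finally show ?thesis by simp
qed

lemma hess_alg:
  fixes A :: "real^'n^'n" and d lam :: "'n \<Rightarrow> real"
  assumes A: "A = (\<chi> i j. if i = j then d i else 0)" and ev: "eigenvalues_mult A lam"
    and pos: "\<forall>i. lam i > 0" and s: "(1 / real CARD('n)) * (\<Sum>i\<in>UNIV. ln (lam i)) = C0"
  shows "(\<Prod>i\<in>UNIV. d i) = exp (real CARD('n) * C0)" and "\<forall>i. d i > 0"
proof -
  have "charpoly A = det (\<chi> i j. if i = j then [:- d i, 1:] else 0)"
    unfolding charpoly_def A by (rule arg_cong[where f=det]) (auto simp: vec_eq_iff)
  also have "\<dots> = (\<Prod>i\<in>UNIV. [:- d i, 1:])" by (subst det_diagonal) auto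
  finally have eq: "(\<Prod>i\<in>UNIV. [:- d i, 1:]) = (\<Prod>i\<in>UNIV. [:- lam i, 1:])"
    using ev unfolding eigenvalues_mult_def by simp
  have pe: "(\<Prod>i\<in>UNIV. x - d i) = (\<Prod>i\<in>UNIV. x - lam i)" for x
    using arg_cong[OF eq, of "\<lambda>p. poly p x"] by (simp add: poly_prod)
  show "\<forall>i. d i > 0"
  proof
    fix j
    have "(\<Prod>i\<in>UNIV. d j - d i) = 0" by (rule prod_zero) auto
    then have "(\<Prod>i\<in>UNIV. d j - lam i) = 0" using pe[of "d j"] by simp
    then obtain i where "d j - lam i = 0" using prod_zero_iff[of UNIV] by auto
    then show "d j > 0" using pos by simp
  qed
  have "(\<Prod>i\<in>UNIV. d i) = (\<Prod>i\<in>UNIV. lam i)"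
    using pe[of 0] by (simp add: prod_neg)
  also have "\<dots> = (\<Prod>i\<in>UNIV. exp (ln (lam i)))" using pos by simp
  also have "\<dots> = exp (\<Sum>i\<in>UNIV. ln (lam i))" by (simp add: exp_sum)
  also have "(\<Sum>i\<in>UNIV. ln (lam i)) = real CARD('n) * C0" using s by (simp add: field_simps)
  finally show "(\<Prod>i\<in>UNIV. d i) = exp (real CARD('n) * C0)" .
qed


lemma ode_solve:
  fixes g g2 :: "real \<Rightarrow> real" and N :: nat and C' :: real
  assumes N: "N \<ge> 1" and Cp: "C' > 0"
    and gd: "\<And>r. r > 1 \<Longrightarrow> (g has_real_derivative g2 r) (at r)"
    and gpos: "\<And>r. r > 1 \<Longrightarrow> g r > 0"
    and eq: "\<And>r. r > 1 \<Longrightarrow> g2 r * (g r / r) ^ (N - 1) = C'"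
  shows "\<exists>c. c \<ge> - C' \<and> (\<forall>r>1. g r = r * (c * r powr (- real N) + C') powr (1 / real N))"
proof -
  let ?F = "\<lambda>r. g r ^ N - C' * r ^ N"
  have "?F r = ?F 2" if "r \<in> {1<..}" for r
  proof -
    have "\<exists>c. \<forall>x\<in>{1<..}. ?F x = c"
    proof (rule has_field_derivative_zero_constant)
      fix x :: real assume x: "x \<in> {1<..}"
      have e: "g2 x * g x ^ (N - 1) = C' * x ^ (N - 1)"
        using eq[of x] x by (auto simp: power_divide field_simps)
      have D: "(?F has_field_derivative (of_nat N * g x ^ (N - 1) * g2 x - C' * (of_nat N * x ^ (N - 1)))) (at x)"
        using x by (auto intro!: derivative_eq_intros gd)
      have Z: "of_nat N * g x ^ (N - 1) * g2 x - C' * (of_nat N * x ^ (N - 1)) = 0"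
        using e by (simp add: algebra_simps)
      show "(?F has_field_derivative 0) (at x within {1<..})"
        using has_field_derivative_at_within[OF D[unfolded Z]] .
    qed simp
    then show ?thesis using that by force
  qed
  define c where "c = ?F 2"
  have F: "g r ^ N = C' * r ^ N + c" if "r > 1" for r
    using \<open>\<And>r. r \<in> {1<..} \<Longrightarrow> ?F r = ?F 2\<close>[of r] that by (simp add: c_def)
  have cge: "c \<ge> - C'"
  proof (rule ccontr)
    assume "\<not> c \<ge> - C'"
    then have q: "- c / C' > 1" using Cp by (simp add: field_simps)
    define r0 where "r0 = root N (- c / C')"
    have N0: "0 < N" using N by simp
    have r0: "r0 > 1" unfolding r0_def using q N0 by simp
    have "r0 ^ N = - c / C'" unfolding r0_def using q N0 by simp
    then have "g r0 ^ N = 0" using F[OF r0] Cp by simp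
    then show False using gpos[OF r0] by simp
  qed
  have "g r = r * (c * r powr (- real N) + C') powr (1 / real N)" if r: "r > 1" for r
  proof -
    have N0: "0 < N" using N by simp
    have "c * r powr (- real N) + C' = (g r / r) ^ N"
      using F[OF r] r by (simp add: powr_minus powr_realpow power_divide field_simps)
    also have "\<dots> = (g r / r) powr (real N)" using gpos[OF r] r by (simp add: powr_realpow)
    finally have "(c * r powr (- real N) + C') powr (1 / real N) = g r / r"
      using gpos[OF r] r N0 by (simp add: powr_powr)
    then show ?thesis using r by simp
  qed
  then show ?thesis using cge by blast
qed


lemma integral_rep:
  fixes f :: "real \<Rightarrow> real" and N :: nat
  assumes N: "N \<ge> 1" and Cp: "C' > 0" and c: "c \<ge> - C'"
    and fd: "\<And>r. r > 1 \<Longrightarrow> (f has_real_derivative r * (c * r powr (- real N) + C') powr (1 / real N)) (at r)"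
  shows "\<exists>c0'. \<forall>R>1. f R = integral {1..R} (\<lambda>t. t * (c * t powr (- real N) + C') powr (1 / real N)) + c0'"
proof -
  define h where "h = (\<lambda>t::real. t * (c * t powr (- real N) + C') powr (1 / real N))"
  have nonneg: "c * t powr (- real N) + C' \<ge> 0" if t: "t \<ge> 1" for t
  proof (cases "c \<ge> 0")
    case True then show ?thesis using Cp by simp
  next
    case False
    have "t powr (- real N) \<le> 1" using t by (simp add: powr_minus ge_one_powr_ge_zero inverse_le_1_iff)
    then have "c * t powr (- real N) \<ge> c" using False by (simp add: mult_le_cancel_left1)
    then show ?thesis using c by simp
  qed
  have hc: "continuous_on {1..} h"
    unfolding h_def using N nonneg
    by (intro continuous_intros continuous_on_powr') auto
  have Id: "((\<lambda>R. integral {1..R} h) has_real_derivative h R) (at R)" if R: "R > 1" for R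
  proof -
    have "((\<lambda>u. integral {1..u} h) has_vector_derivative h R) (at R within {1..R+1})"
      by (rule integral_has_vector_derivative) (use R in \<open>auto intro: continuous_on_subset[OF hc]\<close>)
    moreover have "at R within {1..R+1} = at R"
      by (rule at_within_interior) (use R in auto)
    ultimately show ?thesis by (simp add: has_real_derivative_iff_has_vector_derivative)
  qed
  have "\<exists>K. \<forall>x\<in>{1<..}. (\<lambda>R. f R - integral {1..R} h) x = K"
  proof (rule has_field_derivative_zero_constant)
    fix x :: real assume x: "x \<in> {1<..}"
    have "((\<lambda>R. f R - integral {1..R} h) has_real_derivative h x - h x) (at x)"
      using x fd[of x] Id[of x] unfolding h_def by (auto intro!: derivative_eq_intros)
    then show "((\<lambda>R. f R - integral {1..R} h) has_real_derivative 0) (at x within {1<..})"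
      by (simp add: has_field_derivative_at_within)
  qed simp
  then obtain K where "\<And>x. x > 1 \<Longrightarrow> f x - integral {1..x} h = K" by auto
  then show ?thesis unfolding h_def[symmetric] by (metis add.commute diff_eq_eq)
qed


lemma gchoose_bound:
  fixes a :: real assumes "0 < a" "a \<le> 1"
  shows "\<bar>a gchoose k\<bar> \<le> 1"
proof (induction k)
  case 0 then show ?case by simp
next
  case (Suc k)
  have h: "a * (a gchoose k) = of_nat k * (a gchoose k) + of_nat (Suc k) * (a gchoose (Suc k))"
    by (rule gbinomial_mult_1)
  have h2: "real (Suc k) * (a gchoose (Suc k)) = (a - real k) * (a gchoose k)"
    using h by (simp only: left_diff_distrib)
  have e: "a gchoose (Suc k) = (a - real k) / real (Suc k) * (a gchoose k)"
  proof -
    have nz: "real (Suc k) \<noteq> 0" by (simp only: of_nat_eq_0_iff)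
    show ?thesis unfolding times_divide_eq_left eq_divide_eq using nz h2 by (simp only: mult.commute) simp
  qed
  have "\<bar>a - real k\<bar> \<le> real (Suc k)" using assms by (simp only: of_nat_Suc; linarith?)
  then have "\<bar>(a - real k) / real (Suc k)\<bar> \<le> 1" by (simp only: abs_divide abs_of_nat divide_le_eq_1; simp?)
  then show ?case unfolding e abs_mult using Suc.IH
    by (metis abs_ge_zero mult_le_one)
qed

lemma denom_bound:
  fixes N :: nat assumes "N \<ge> 3"
  shows "\<bar>2 - real N * real k\<bar> \<ge> 1"
proof (cases k)
  case 0 then show ?thesis by simp
next
  case (Suc m)
  have "real N * real k \<ge> 3" using assms Suc
    by (metis One_nat_def le_add1 mult.right_neutral mult_le_mono of_nat_le_iff of_nat_mult of_nat_numeral plus_1_eq_Suc)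
  then show ?thesis by simp
qed

lemma series_rep:
  fixes f :: "real \<Rightarrow> real" and N :: nat and c C' :: real
  assumes N: "N \<ge> 3" and Cp: "C' > 0"
    and fd: "\<And>r. r > 1 \<Longrightarrow> (f has_real_derivative r * (c * r powr (- real N) + C') powr (1 / real N)) (at r)"
  shows "\<exists>c0. \<forall>R. R > max 1 ((\<bar>c\<bar> / C') powr (1 / real N)) \<longrightarrow>
     summable (\<lambda>j. ((1 / real N) gchoose (j + 1)) / (2 - real N * real (j + 1)) * (c * R powr (- real N) / C') ^ (j + 1)) \<and>
     f R = 1/2 * C' powr (1 / real N) * R^2 + c0 + C' powr (1 / real N) * R^2 *
       (\<Sum>j. ((1 / real N) gchoose (j + 1)) / (2 - real N * real (j + 1)) * (c * R powr (- real N) / C') ^ (j + 1))"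
proof -
  define \<alpha> where "\<alpha> = 1 / real N"
  define b where "b = c / C'"
  define co where "co = (\<lambda>k. (\<alpha> gchoose k) * b ^ k / (2 - real N * real k))"
  define Q where "Q = (\<lambda>w. \<Sum>k. co k * w ^ k)"
  define R0 where "R0 = max 1 ((\<bar>c\<bar> / C') powr \<alpha>)"
  have Npos: "real N > 0" using N by simp
  have \<alpha>: "0 < \<alpha>" "\<alpha> \<le> 1" unfolding \<alpha>_def using N by auto
  have dnz: "2 - real N * real k \<noteq> 0" for k using denom_bound[OF N, of k] by auto
  have cob: "\<bar>co k * x ^ k\<bar> \<le> \<bar>b * x\<bar> ^ k" for k x
  proof -
    have "\<bar>co k * x ^ k\<bar> = \<bar>\<alpha> gchoose k\<bar> * \<bar>b * x\<bar> ^ k / \<bar>2 - real N * real k\<bar>"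
      unfolding co_def by (simp add: abs_mult power_abs power_mult_distrib)
    also have "\<dots> \<le> \<bar>\<alpha> gchoose k\<bar> * \<bar>b * x\<bar> ^ k"
      using divide_left_mono[of 1 "\<bar>2 - real N * real k\<bar>" "\<bar>\<alpha> gchoose k\<bar> * \<bar>b * x\<bar> ^ k"] denom_bound[OF N, of k]
      by simp
    also have "\<dots> \<le> 1 * \<bar>b * x\<bar> ^ k"
      by (rule mult_right_mono) (use gchoose_bound[OF \<alpha>] in auto)
    finally show ?thesis by simp
  qed
  have summ: "summable (\<lambda>k. co k * x ^ k)" if "\<bar>b * x\<bar> < 1" for x
    by (rule summable_comparison_test'[OF summable_geometric[of "\<bar>b * x\<bar>"]])
       (use that cob in auto)
  have Kex: "\<exists>K. \<bar>w\<bar> < K \<and> \<bar>b\<bar> * K < 1" if "\<bar>b * w\<bar> < 1" for w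
  proof -
    define K where "K = \<bar>w\<bar> + (1 - \<bar>b\<bar> * \<bar>w\<bar>) / (2 * (\<bar>b\<bar> + 1))"
    have p: "1 - \<bar>b\<bar> * \<bar>w\<bar> > 0" using that by (simp add: abs_mult)
    have "\<bar>w\<bar> < K" unfolding K_def using p by (simp add: add_pos_nonneg)
    moreover have "\<bar>b\<bar> * K < 1"
    proof -
      have "\<bar>b\<bar> * ((1 - \<bar>b\<bar> * \<bar>w\<bar>) / (2 * (\<bar>b\<bar> + 1))) < 1 - \<bar>b\<bar> * \<bar>w\<bar>"
      proof -
        have q: "\<bar>b\<bar> / (2 * (\<bar>b\<bar> + 1)) < 1" by (simp add: divide_less_eq)
        have "\<bar>b\<bar> * ((1 - \<bar>b\<bar> * \<bar>w\<bar>) / (2 * (\<bar>b\<bar> + 1))) = (1 - \<bar>b\<bar> * \<bar>w\<bar>) * (\<bar>b\<bar> / (2 * (\<bar>b\<bar> + 1)))"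
          by simp
        also have "\<dots> < (1 - \<bar>b\<bar> * \<bar>w\<bar>) * 1" by (rule mult_strict_left_mono[OF q p])
        finally show ?thesis by simp
      qed
      then show ?thesis unfolding K_def by (simp add: distrib_left)
    qed
    ultimately show ?thesis by blast
  qed
  have dQ: "DERIV Q w :> (\<Sum>k. diffs co k * w ^ k)" and sd: "summable (\<lambda>k. diffs co k * w ^ k)"
    if w: "\<bar>b * w\<bar> < 1" for w
  proof -
    obtain K where K: "\<bar>w\<bar> < K" "\<bar>b\<bar> * K < 1" using Kex[OF w] by blast
    have sK: "summable (\<lambda>k. co k * K ^ k)"
      using K by (intro summ) (simp add: abs_mult)
    show "DERIV Q w :> (\<Sum>k. diffs co k * w ^ k)"
      unfolding Q_def by (rule termdiffs_strong[OF sK]) (use K in simp)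
    show "summable (\<lambda>k. diffs co k * w ^ k)"
    proof (rule termdiff_converges[of w K])
      show "norm w < K" using K by simp
      fix x :: real assume "norm x < K"
      then have "\<bar>b * x\<bar> < 1" using K
        using mult_left_mono[of "\<bar>x\<bar>" K "\<bar>b\<bar>"] by (simp add: abs_mult)
      then show "summable (\<lambda>n. co n * x ^ n)" by (rule summ)
    qed
  qed
  have key: "2 * Q w - real N * (w * (\<Sum>k. diffs co k * w ^ k)) = (1 + b * w) powr \<alpha>"
    if w: "\<bar>b * w\<bar> < 1" for w
  proof -
    define D where "D = (\<Sum>k. diffs co k * w ^ k)"
    have S1: "(\<lambda>k. co k * w ^ k) sums Q w" unfolding Q_def using summ[OF w] by (rule summable_sums)
    have S2: "(\<lambda>k. w * (diffs co k * w ^ k)) sums (w * D)"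
      unfolding D_def by (rule sums_mult[OF summable_sums[OF sd[OF w]]])
    have "(\<lambda>k. (\<lambda>k. real k * co k * w ^ k) (Suc k)) sums (w * D)"
      using S2 by (simp add: diffs_def mult_ac)
    then have S3: "(\<lambda>k. real k * co k * w ^ k) sums (w * D)"
      by (subst (asm) sums_Suc_iff) simp
    have S4: "(\<lambda>k. 2 * (co k * w ^ k) - real N * (real k * co k * w ^ k)) sums (2 * Q w - real N * (w * D))"
      by (intro sums_diff sums_mult S1 S3)
    have "(\<lambda>k. 2 * (co k * w ^ k) - real N * (real k * co k * w ^ k)) = (\<lambda>k. (\<alpha> gchoose k) * (b * w) ^ k)"
    proof
      fix k
      have "2 * (co k * w ^ k) - real N * (real k * co k * w ^ k) = (2 - real N * real k) * co k * w ^ k"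
        by (simp add: algebra_simps)
      also have "\<dots> = (\<alpha> gchoose k) * (b * w) ^ k"
        unfolding co_def using dnz[of k] by (simp add: power_mult_distrib)
      finally show "2 * (co k * w ^ k) - real N * (real k * co k * w ^ k) = (\<alpha> gchoose k) * (b * w) ^ k" .
    qed
    with S4 have "(\<lambda>k. (\<alpha> gchoose k) * (b * w) ^ k) sums (2 * Q w - real N * (w * D))" by simp
    moreover have "(\<lambda>k. (\<alpha> gchoose k) * (b * w) ^ k) sums (1 + b * w) powr \<alpha>"
      by (rule gen_binomial_real) (rule w)
    ultimately show ?thesis unfolding D_def by (rule sums_unique2)
  qed
  have small: "\<bar>b * R powr (- real N)\<bar> < 1" if R: "R > R0" for R
  proof -
    have R1: "R > 1" and R2: "R > (\<bar>c\<bar> / C') powr \<alpha>" using R unfolding R0_def by auto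
    have "((\<bar>c\<bar> / C') powr \<alpha>) powr real N < R powr real N"
      by (rule powr_less_mono2) (use R2 Npos in auto)
    moreover have "((\<bar>c\<bar> / C') powr \<alpha>) powr real N = \<bar>c\<bar> / C'"
      unfolding powr_powr \<alpha>_def using Npos Cp by simp
    ultimately have "\<bar>c\<bar> / C' < R powr real N" by simp
    moreover have "R powr real N > 0" using R1 by simp
    ultimately have "\<bar>c\<bar> / C' / R powr real N < 1" by (metis divide_less_eq_1_pos)
    then show ?thesis unfolding b_def using R1 Cp by (simp add: abs_mult powr_minus divide_inverse)
  qed
  define G where "G = (\<lambda>R. C' powr \<alpha> * R^2 * Q (R powr (- real N)))"
  have Gd: "(G has_real_derivative R * (c * R powr (- real N) + C') powr \<alpha>) (at R)" if R: "R > R0" for R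
  proof -
    have R1: "R > 1" using R unfolding R0_def by auto
    define w where "w = R powr (- real N)"
    define D where "D = (\<Sum>k. diffs co k * w ^ k)"
    have bw: "\<bar>b * w\<bar> < 1" unfolding w_def by (rule small[OF R])
    have pd: "((\<lambda>R. R powr (- real N)) has_real_derivative (- real N) * R powr (- real N - 1)) (at R)"
      using has_real_derivative_powr[of R "- real N"] R1 by simp
    have qd: "((\<lambda>R. Q (R powr (- real N))) has_real_derivative D * ((- real N) * R powr (- real N - 1))) (at R)"
      using DERIV_chain2[OF dQ[OF bw, unfolded w_def] pd] unfolding D_def w_def by simp
    have e1: "R powr (- real N - 1) = w / R"
      unfolding w_def using R1 by (simp add: powr_diff)
    have "(G has_real_derivative C' powr \<alpha> * (2 * R * Q w + R^2 * (D * ((- real N) * R powr (- real N - 1))))) (at R)"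
      unfolding G_def w_def by (auto intro!: derivative_eq_intros qd simp: algebra_simps)
    moreover have "C' powr \<alpha> * (2 * R * Q w + R^2 * (D * ((- real N) * R powr (- real N - 1))))
        = C' powr \<alpha> * R * (2 * Q w - real N * (w * D))"
      unfolding e1 using R1 by (simp add: power2_eq_square field_simps)
    moreover have "C' powr \<alpha> * R * (2 * Q w - real N * (w * D)) = R * (c * R powr (- real N) + C') powr \<alpha>"
    proof -
      have "C' powr \<alpha> * (1 + b * w) powr \<alpha> = (C' * (1 + b * w)) powr \<alpha>"
        using Cp bw by (simp add: powr_mult)
      moreover have "C' * (1 + b * w) = c * R powr (- real N) + C'"
        unfolding b_def w_def using Cp by (simp add: field_simps)
      ultimately show ?thesis using key[OF bw] unfolding D_def by (simp add: mult_ac)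
    qed
    ultimately show ?thesis by simp
  qed
  have "\<exists>K. \<forall>x\<in>{R0<..}. (\<lambda>R. f R - G R) x = K"
  proof (rule has_field_derivative_zero_constant)
    fix x :: real assume x: "x \<in> {R0<..}"
    have x1: "x > 1" using x unfolding R0_def by auto
    have "((\<lambda>R. f R - G R) has_real_derivative
        x * (c * x powr (- real N) + C') powr (1 / real N) - x * (c * x powr (- real N) + C') powr \<alpha>) (at x)"
      using fd[OF x1] Gd[of x] x by (auto intro!: derivative_eq_intros)
    then show "((\<lambda>R. f R - G R) has_real_derivative 0) (at x within {R0<..})"
      unfolding \<alpha>_def by (simp add: has_field_derivative_at_within)
  qed simp
  then obtain c0 where c0: "\<And>R. R > R0 \<Longrightarrow> f R = G R + c0" by (metis greaterThan_iff diff_eq_eq add.commute)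
  show ?thesis
  proof (intro exI[of _ c0] allI impI conjI)
    fix R assume R: "R > max 1 ((\<bar>c\<bar> / C') powr (1 / real N))"
    then have R': "R > R0" unfolding R0_def \<alpha>_def by simp
    define w where "w = R powr (- real N)"
    have bw: "\<bar>b * w\<bar> < 1" unfolding w_def by (rule small[OF R'])
    have tm: "co (Suc j) * w ^ (Suc j) = ((1 / real N) gchoose (j + 1)) / (2 - real N * real (j + 1)) * (c * R powr (- real N) / C') ^ (j + 1)" for j
      unfolding co_def b_def w_def \<alpha>_def by (simp add: power_mult_distrib power_divide mult_ac)
    have sm: "summable (\<lambda>j. co (Suc j) * w ^ (Suc j))"
      using summ[OF bw] by (subst summable_Suc_iff)
    have Qs: "Q w = 1/2 + (\<Sum>j. co (Suc j) * w ^ (Suc j))"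
      unfolding Q_def suminf_split_head[OF summ[OF bw]] by (simp add: co_def)
    show "summable (\<lambda>j. ((1 / real N) gchoose (j + 1)) / (2 - real N * real (j + 1)) * (c * R powr (- real N) / C') ^ (j + 1))"
      using sm by (simp only: tm)
    show "f R = 1/2 * C' powr (1 / real N) * R^2 + c0 + C' powr (1 / real N) * R^2 *
       (\<Sum>j. ((1 / real N) gchoose (j + 1)) / (2 - real N * real (j + 1)) * (c * R powr (- real N) / C') ^ (j + 1))"
    proof -
      have se: "(\<Sum>j. ((1 / real N) gchoose (j + 1)) / (2 - real N * real (j + 1)) * (c * R powr (- real N) / C') ^ (j + 1))
          = (\<Sum>j. co (Suc j) * w ^ (Suc j))" by (simp only: tm)
      have "f R = C' powr \<alpha> * R^2 * Q w + c0" using c0[OF R'] unfolding G_def w_def .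
      then show ?thesis unfolding se Qs \<alpha>_def by (simp add: algebra_simps)
    qed
  qed
qed


theorem theorem2p1:
  fixes u :: "real^'n \<Rightarrow> real" and C0 :: real
  assumes n3: "CARD('n) \<ge> 3"
    and C2: "C2_on {x. norm x > 1} u"
    and rad: "radial u"
    and eq: "\<forall>x. norm x > 1 \<longrightarrow> (\<exists>lam. eigenvalues_mult (hessian u x) lam \<and>
               (\<forall>i. lam i > 0) \<and>
               (1 / real CARD('n)) * (\<Sum>i\<in>UNIV. ln (lam i)) = C0)"
  shows "let n = real CARD('n); C' = exp (n * C0) in
    \<exists>c c0' c0. c \<ge> - C' \<and>
      (\<forall>x. norm x > 1 \<longrightarrow>
         u x = integral {1..norm x} (\<lambda>t. t * (c * t powr (- n) + C') powr (1 / n)) + c0') \<and>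
      (\<forall>x. norm x > max 1 ((\<bar>c\<bar> / C') powr (1 / n)) \<longrightarrow>
         summable (\<lambda>j. ((1 / n) gchoose (j + 1)) / (2 - n * real (j + 1))
                         * (c * norm x powr (- n) / C') ^ (j + 1)) \<and>
         u x = 1 / 2 * C' powr (1 / n) * (norm x)\<^sup>2 + c0
               + C' powr (1 / n) * (norm x)\<^sup>2 *
                 (\<Sum>j. ((1 / n) gchoose (j + 1)) / (2 - n * real (j + 1))
                         * (c * norm x powr (- n) / C') ^ (j + 1)))"
proof -
  define N where "N = CARD('n)"
  define C' where "C' = exp (real N * C0)"
  have Cp: "C' > 0" unfolding C'_def by simp
  have N3: "N \<ge> 3" using n3 unfolding N_def .
  obtain k :: 'n where True by simp
  obtain j :: 'n where jk: "j \<noteq> k"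
  proof -
    have "card (UNIV - {k}) > 0" using n3 by (simp add: card_Diff_singleton)
    then obtain j where "j \<in> UNIV - {k}" by (metis card_gt_0_iff ex_in_conv)
    then show ?thesis using that by auto
  qed
  define f where "f \<equiv> \<lambda>r. u (r *\<^sub>R axis k 1)"
  define g where "g \<equiv> \<lambda>r. partial k u (r *\<^sub>R axis k 1)"
  define g2 where "g2 \<equiv> \<lambda>r. partial k (partial k u) (r *\<^sub>R axis k 1)"
  note RF = radial_facts[OF C2 rad, where k=k, folded f_def g_def g2_def]
  have gd: "(g has_real_derivative g2 r) (at r)" if "r > 1" for r
    unfolding g2_def g_def by (rule RF(2)[OF that, unfolded g_def g2_def])
  have fd0: "(f has_real_derivative g r) (at r)" if "r > 1" for r
    unfolding f_def g_def by (rule RF(1)[OF that, unfolded f_def g_def])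
  have uf: "u y = f (norm y)" if "norm y > 1" for y
    unfolding f_def by (rule RF(3)[OF that, unfolded f_def])
  have alg: "g2 r * (g r / r) ^ (N - 1) = C' \<and> g r > 0" if r: "r > 1" for r
  proof -
    define d where "d = (\<lambda>i. if i = k then g2 r else g r / r)"
    have nx: "norm (r *\<^sub>R (axis k 1 :: real^'n)) > 1" using r by simp
    obtain lam where lam: "eigenvalues_mult (hessian u (r *\<^sub>R axis k 1)) lam" "\<forall>i. lam i > 0"
      "(1 / real CARD('n)) * (\<Sum>i\<in>UNIV. ln (lam i)) = C0"
      using eq nx by blast
    have H: "hessian u (r *\<^sub>R axis k 1) = (\<chi> i j. if i = j then d i else 0)"
      unfolding RF(5)[OF r] d_def by (simp add: vec_eq_iff g_def g2_def)
    note HA = hess_alg[OF H lam]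
    have "(\<Prod>i\<in>UNIV. d i) = d k * (\<Prod>i\<in>UNIV - {k}. d i)"
      by (rule prod.remove) auto
    also have "(\<Prod>i\<in>UNIV - {k}. d i) = (\<Prod>i\<in>UNIV - {k}. g r / r)"
      by (rule prod.cong) (auto simp: d_def)
    also have "\<dots> = (g r / r) ^ (N - 1)" by (simp add: card_Diff_singleton N_def)
    finally have "g2 r * (g r / r) ^ (N - 1) = C'"
      using HA(1) unfolding C'_def N_def by (simp add: d_def)
    moreover have "g r / r > 0" using HA(2) jk unfolding d_def by metis
    then have "g r > 0" using r by (simp add: zero_less_divide_iff)
    ultimately show ?thesis by simp
  qed
  obtain c where c: "c \<ge> - C'" and gform: "\<forall>r>1. g r = r * (c * r powr (- real N) + C') powr (1 / real N)"
    using ode_solve[of N C' g g2, OF _ Cp gd] N3 alg by auto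
  have fd: "(f has_real_derivative r * (c * r powr (- real N) + C') powr (1 / real N)) (at r)" if "r > 1" for r
    using fd0[OF that] gform that by simp
  obtain c0' where c0': "\<forall>R>1. f R = integral {1..R} (\<lambda>t. t * (c * t powr (- real N) + C') powr (1 / real N)) + c0'"
    using integral_rep[of N C' c f] N3 Cp c fd by auto
  obtain c0 where c0: "\<forall>R. R > max 1 ((\<bar>c\<bar> / C') powr (1 / real N)) \<longrightarrow>
     summable (\<lambda>j. ((1 / real N) gchoose (j + 1)) / (2 - real N * real (j + 1)) * (c * R powr (- real N) / C') ^ (j + 1)) \<and>
     f R = 1/2 * C' powr (1 / real N) * R^2 + c0 + C' powr (1 / real N) * R^2 *
       (\<Sum>j. ((1 / real N) gchoose (j + 1)) / (2 - real N * real (j + 1)) * (c * R powr (- real N) / C') ^ (j + 1))"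
    using series_rep[of N C' f c] N3 Cp fd by blast
  show ?thesis
    unfolding Let_def N_def[symmetric] C'_def[symmetric]
  proof (rule exI[of _ c], rule exI[of _ c0'], rule exI[of _ c0], intro conjI allI impI)
    show "- C' \<le> c" by (rule c)
  next
    fix x :: "real^'n" assume x: "norm x > 1"
    show "u x = integral {1..norm x} (\<lambda>t. t * (c * t powr (- real N) + C') powr (1 / real N)) + c0'"
      using uf[OF x] c0' x by simp
  next
    fix x :: "real^'n" assume x: "norm x > max 1 ((\<bar>c\<bar> / C') powr (1 / real N))"
    then have x1: "norm x > 1" by simp
    show "summable (\<lambda>j. ((1 / real N) gchoose (j + 1)) / (2 - real N * real (j + 1)) * (c * norm x powr (- real N) / C') ^ (j + 1))"
      using c0 x by blast
    show "u x = 1 / 2 * C' powr (1 / real N) * (norm x)\<^sup>2 + c0 + C' powr (1 / real N) * (norm x)\<^sup>2 *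
       (\<Sum>j. ((1 / real N) gchoose (j + 1)) / (2 - real N * real (j + 1)) * (c * norm x powr (- real N) / C') ^ (j + 1))"
      using c0 x uf[OF x1] by simp
  qed
qed

end
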